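(* Let $\Gamma$ be a finite connected $(G,2)$-distance-transitive graph, and suppose $\Gamma\not\cong \mathrm{K}_{m[b]}$ for any $m\ge3$ and $b\ge2$. Let $N$ be a normal subgroup of $G$ maximal with respect to having at least $3$ orbits on $V(\Gamma)$. Then $N$ is semiregular on $V(\Gamma)$, $G/N$ is quasiprimitive or bi-quasiprimitive on $V(\Gamma_N)$, $\Gamma$ is a cover of $\Gamma_N$, and either $\Gamma_N$ is a complete $G/N$-arc-transitive graph or $\Gamma_N$ is a non-complete $(G/N,2)$-distance-transitive graph. Moreover, if $\Gamma$ is $G$-locally-primitive, then $\Gamma_N$ is $G/N$-locally-primitive; and if $\Gamma$ has odd order, then $\Gamma_N$ has odd order.
   Context: For $G\le\mathrm{Aut}(\Gamma)$ and $s\le d(\Gamma)$, $\Gamma$ is $(G,s)$-distance-transitive if $G$ is vertex-transitive and $G_u$ is transitive on $\Gamma_i(u)$ for all $i\le s$ and all vertices $u$. $\mathrm{K}_{m[b]}$ is the complete multipartite graph with $m$ parts of size $b$. $\Gamma_N$ is the quotient graph whose vertices are the $N$-orbits, two orbits adjacent iff some vertices in them are adjacent; $\Gamma$ is a cover of $\Gamma_N$ if for any two adjacent orbits $B,B'$ each vertex of $B$ has exactly one neighbour in $B'$. A transitive group is quasiprimitive if every nontrivial normal subgroup is transitive, and bi-quasiprimitive if every nontrivial normal subgroup has at most two orbits and some one has exactly two. $\Gamma$ is $G$-locally-primitive if $G_u$ is primitive on $\Gamma(u)$ for all $u$; $G$-arc-transitive means $G$ is transitive on arcs. *)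

theory Defs
  imports "HOL-Algebra.Algebra"
begin

definition sgraph :: "'a set \<Rightarrow> ('a \<Rightarrow> 'a \<Rightarrow> bool) \<Rightarrow> bool" where
  "sgraph V E \<longleftrightarrow> (\<forall>u v. E u v \<longrightarrow> u \<in> V \<and> v \<in> V) \<and> (\<forall>u v. E u v \<longrightarrow> E v u) \<and> (\<forall>u. \<not> E u u)"

inductive walk :: "('a \<Rightarrow> 'a \<Rightarrow> bool) \<Rightarrow> 'a \<Rightarrow> 'a \<Rightarrow> nat \<Rightarrow> bool" for E where
  walk_nil: "walk E u u 0"
| walk_cons: "E u w \<Longrightarrow> walk E w v n \<Longrightarrow> walk E u v (Suc n)"

definition connected_graph :: "'a set \<Rightarrow> ('a \<Rightarrow> 'a \<Rightarrow> bool) \<Rightarrow> bool" where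
  "connected_graph V E \<longleftrightarrow> (\<forall>u\<in>V. \<forall>v\<in>V. \<exists>n. walk E u v n)"

definition gdist :: "('a \<Rightarrow> 'a \<Rightarrow> bool) \<Rightarrow> 'a \<Rightarrow> 'a \<Rightarrow> nat" where
  "gdist E u v = (LEAST n. walk E u v n)"

definition diam :: "'a set \<Rightarrow> ('a \<Rightarrow> 'a \<Rightarrow> bool) \<Rightarrow> nat" where
  "diam V E = Max {gdist E u v | u v. u \<in> V \<and> v \<in> V}"

definition sphere :: "'a set \<Rightarrow> ('a \<Rightarrow> 'a \<Rightarrow> bool) \<Rightarrow> 'a \<Rightarrow> nat \<Rightarrow> 'a set" where
  "sphere V E u i = {v \<in> V. (\<exists>n. walk E u v n) \<and> gdist E u v = i}"

definition nbhd :: "'a set \<Rightarrow> ('a \<Rightarrow> 'a \<Rightarrow> bool) \<Rightarrow> 'a \<Rightarrow> 'a set" where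
  "nbhd V E u = {v \<in> V. E u v}"

definition complete_graph :: "'a set \<Rightarrow> ('a \<Rightarrow> 'a \<Rightarrow> bool) \<Rightarrow> bool" where
  "complete_graph V E \<longleftrightarrow> (\<forall>u\<in>V. \<forall>v\<in>V. u \<noteq> v \<longrightarrow> E u v)"

definition is_complete_multipartite :: "'a set \<Rightarrow> ('a \<Rightarrow> 'a \<Rightarrow> bool) \<Rightarrow> nat \<Rightarrow> nat \<Rightarrow> bool" where
  "is_complete_multipartite V E m b \<longleftrightarrow>
     (\<exists>P. (\<Union>P = V) \<and> (\<forall>B\<in>P. \<forall>B'\<in>P. B \<noteq> B' \<longrightarrow> B \<inter> B' = {}) \<and>
          card P = m \<and> (\<forall>B\<in>P. card B = b) \<and>
          (\<forall>u\<in>V. \<forall>v\<in>V. E u v \<longleftrightarrow> \<not> (\<exists>B\<in>P. u \<in> B \<and> v \<in> B)))"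

definition orbit_of :: "('g \<Rightarrow> 'a \<Rightarrow> 'a) \<Rightarrow> 'g set \<Rightarrow> 'a \<Rightarrow> 'a set" where
  "orbit_of phi H v = (\<lambda>h. phi h v) ` H"

definition orbits_of :: "('g \<Rightarrow> 'a \<Rightarrow> 'a) \<Rightarrow> 'g set \<Rightarrow> 'a set \<Rightarrow> 'a set set" where
  "orbits_of phi H S = orbit_of phi H ` S"

definition transitive_on :: "('g \<Rightarrow> 'a \<Rightarrow> 'a) \<Rightarrow> 'g set \<Rightarrow> 'a set \<Rightarrow> bool" where
  "transitive_on phi H S \<longleftrightarrow> (\<forall>x\<in>S. \<forall>y\<in>S. \<exists>h\<in>H. phi h x = y)"

definition stab :: "('g, 'b) monoid_scheme \<Rightarrow> ('g \<Rightarrow> 'a \<Rightarrow> 'a) \<Rightarrow> 'a \<Rightarrow> 'g set" where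
  "stab G phi u = {g \<in> carrier G. phi g u = u}"

definition primitive_on :: "('g \<Rightarrow> 'a \<Rightarrow> 'a) \<Rightarrow> 'g set \<Rightarrow> 'a set \<Rightarrow> bool" where
  "primitive_on phi H S \<longleftrightarrow> transitive_on phi H S \<and>
     (\<forall>B. B \<subseteq> S \<longrightarrow> (\<forall>h\<in>H. phi h ` B = B \<or> phi h ` B \<inter> B = {}) \<longrightarrow>
          card B \<le> 1 \<or> B = S)"

definition aut_action :: "('g, 'b) monoid_scheme \<Rightarrow> ('g \<Rightarrow> 'a \<Rightarrow> 'a) \<Rightarrow> 'a set \<Rightarrow> ('a \<Rightarrow> 'a \<Rightarrow> bool) \<Rightarrow> bool" where
  "aut_action G phi V E \<longleftrightarrow> group_action G V phi \<and> inj_on phi (carrier G) \<and>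
     (\<forall>g\<in>carrier G. \<forall>u\<in>V. \<forall>v\<in>V. E u v \<longleftrightarrow> E (phi g u) (phi g v))"

definition distance_transitive :: "('g, 'b) monoid_scheme \<Rightarrow> ('g \<Rightarrow> 'a \<Rightarrow> 'a) \<Rightarrow> 'a set \<Rightarrow> ('a \<Rightarrow> 'a \<Rightarrow> bool) \<Rightarrow> nat \<Rightarrow> bool" where
  "distance_transitive G phi V E s \<longleftrightarrow> aut_action G phi V E \<and> s \<le> diam V E \<and>
     transitive_on phi (carrier G) V \<and>
     (\<forall>u\<in>V. \<forall>i\<le>s. transitive_on phi (stab G phi u) (sphere V E u i))"

definition arc_transitive :: "('g, 'b) monoid_scheme \<Rightarrow> ('g \<Rightarrow> 'a \<Rightarrow> 'a) \<Rightarrow> 'a set \<Rightarrow> ('a \<Rightarrow> 'a \<Rightarrow> bool) \<Rightarrow> bool" where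
  "arc_transitive G phi V E \<longleftrightarrow> aut_action G phi V E \<and>
     (\<forall>u v x y. E u v \<longrightarrow> E x y \<longrightarrow> (\<exists>g\<in>carrier G. phi g u = x \<and> phi g v = y))"

definition locally_primitive :: "('g, 'b) monoid_scheme \<Rightarrow> ('g \<Rightarrow> 'a \<Rightarrow> 'a) \<Rightarrow> 'a set \<Rightarrow> ('a \<Rightarrow> 'a \<Rightarrow> bool) \<Rightarrow> bool" where
  "locally_primitive G phi V E \<longleftrightarrow> aut_action G phi V E \<and>
     (\<forall>u\<in>V. primitive_on phi (stab G phi u) (nbhd V E u))"

definition semiregular :: "('g, 'b) monoid_scheme \<Rightarrow> ('g \<Rightarrow> 'a \<Rightarrow> 'a) \<Rightarrow> 'g set \<Rightarrow> 'a set \<Rightarrow> bool" where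
  "semiregular G phi N V \<longleftrightarrow> (\<forall>v\<in>V. \<forall>n\<in>N. phi n v = v \<longrightarrow> n = one G)"

definition quasiprimitive :: "('g, 'b) monoid_scheme \<Rightarrow> ('g \<Rightarrow> 'a \<Rightarrow> 'a) \<Rightarrow> 'a set \<Rightarrow> bool" where
  "quasiprimitive G phi S \<longleftrightarrow> transitive_on phi (carrier G) S \<and>
     (\<forall>M. normal M G \<longrightarrow> M \<noteq> {one G} \<longrightarrow> transitive_on phi M S)"

definition biquasiprimitive :: "('g, 'b) monoid_scheme \<Rightarrow> ('g \<Rightarrow> 'a \<Rightarrow> 'a) \<Rightarrow> 'a set \<Rightarrow> bool" where
  "biquasiprimitive G phi S \<longleftrightarrow> transitive_on phi (carrier G) S \<and>
     (\<forall>M. normal M G \<longrightarrow> M \<noteq> {one G} \<longrightarrow> card (orbits_of phi M S) \<le> 2) \<and>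
     (\<exists>M. normal M G \<and> M \<noteq> {one G} \<and> card (orbits_of phi M S) = 2)"

text \<open>Vertices of Gamma_N are the N-orbits; distinct orbits are adjacent iff some of their
  vertices are adjacent.\<close>
definition quot_adj :: "'a set set \<Rightarrow> ('a \<Rightarrow> 'a \<Rightarrow> bool) \<Rightarrow> 'a set \<Rightarrow> 'a set \<Rightarrow> bool" where
  "quot_adj P E B B' \<longleftrightarrow> B \<in> P \<and> B' \<in> P \<and> B \<noteq> B' \<and> (\<exists>x\<in>B. \<exists>y\<in>B'. E x y)"

definition quot_act :: "('g \<Rightarrow> 'a \<Rightarrow> 'a) \<Rightarrow> 'g set \<Rightarrow> 'a set \<Rightarrow> 'g set \<Rightarrow> 'a set \<Rightarrow> 'a set" where
  "quot_act phi N V C = (\<lambda>B \<in> orbits_of phi N V. \<Union>g\<in>C. phi g ` B)"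

definition is_cover :: "'a set \<Rightarrow> ('a \<Rightarrow> 'a \<Rightarrow> bool) \<Rightarrow> 'a set set \<Rightarrow> bool" where
  "is_cover V E P \<longleftrightarrow> (\<forall>B\<in>P. \<forall>B'\<in>P. quot_adj P E B B' \<longrightarrow> (\<forall>x\<in>B. \<exists>!y. y \<in> B' \<and> E x y))"

end

theory Submission
  imports Defs
begin

lemma walk0: "walk E u v 0 \<longleftrightarrow> u = v"
  by (subst walk.simps) auto

lemma walk_Suc: "walk E u v (Suc n) \<longleftrightarrow> (\<exists>w. E u w \<and> walk E w v n)"
  by (subst walk.simps) auto

lemma walk1: "walk E u v (Suc 0) \<longleftrightarrow> E u v"
  by (simp add: walk_Suc walk0)

lemma walk2: "walk E u v 2 \<longleftrightarrow> (\<exists>w. E u w \<and> E w v)"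
  by (simp add: numeral_2_eq_2 walk_Suc walk0)

lemma least_char:
  "((\<exists>n. Q n) \<and> (LEAST n. Q n) = (i::nat)) \<longleftrightarrow> (Q i \<and> (\<forall>j<i. \<not> Q j))"
proof
  assume h: "(\<exists>n. Q n) \<and> (LEAST n. Q n) = i"
  then have "Q i" by (metis LeastI_ex)
  moreover have "\<forall>j<i. \<not> Q j" using h not_less_Least by blast
  ultimately show "Q i \<and> (\<forall>j<i. \<not> Q j)" by blast
next
  assume h: "Q i \<and> (\<forall>j<i. \<not> Q j)"
  then have "(LEAST n. Q n) = i" by (intro Least_equality) (auto simp: not_less[symmetric])
  with h show "(\<exists>n. Q n) \<and> (LEAST n. Q n) = i" by blast
qed

lemma sphere_char: "sphere V E u i = {v\<in>V. walk E u v i \<and> (\<forall>j<i. \<not> walk E u v j)}"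
  unfolding sphere_def gdist_def using least_char[of "walk E u _"] by blast

lemma sphere0: "u \<in> V \<Longrightarrow> sphere V E u 0 = {u}"
  by (auto simp: sphere_char walk0)

lemma sphere1: "\<not> E u u \<Longrightarrow> sphere V E u 1 = {v\<in>V. E u v}"
  by (auto simp: sphere_char walk0 walk1)

lemma sphere2: "\<not> E u u \<Longrightarrow> sphere V E u 2 = {v\<in>V. v \<noteq> u \<and> \<not> E u v \<and> (\<exists>w. E u w \<and> E w v)}"
  apply (auto simp: sphere_char walk2)
     apply (metis walk0 zero_less_numeral)
    apply (metis One_nat_def walk1 one_less_numeral_iff semiring_norm(76))
   apply (metis One_nat_def less_2_cases walk0 walk1)
  done

lemma walk_closed:
  assumes "walk E x v n" "x \<in> S" "\<And>a b. a \<in> S \<Longrightarrow> E a b \<Longrightarrow> b \<in> S"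
  shows "v \<in> S"
  using assms by (induction rule: walk.induct) auto

lemma walk_gdist_ge2:
  assumes "walk E u v n" "u \<noteq> v" "\<not> E u v"
  shows "gdist E u v \<ge> 2"
proof -
  have "walk E u v (gdist E u v)" unfolding gdist_def using assms(1) by (metis LeastI_ex)
  then show ?thesis using assms(2,3) walk0[of E u v] walk1[of E u v]
    by (metis One_nat_def less_2_cases not_le)
qed

locale T41 =
  fixes G :: "('g, 'b) monoid_scheme" (structure) and phi :: "'g \<Rightarrow> 'a \<Rightarrow> 'a"
    and V :: "'a set" and E :: "'a \<Rightarrow> 'a \<Rightarrow> bool" and N :: "'g set"
  assumes grp: "group G"
    and graph: "sgraph V E" and fin: "finite V" and conn: "connected_graph V E"
    and dt: "distance_transitive G phi V E 2"
    and not_cmp: "\<not> (\<exists>m b. m \<ge> 3 \<and> b \<ge> 2 \<and> is_complete_multipartite V E m b)"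
    and N_normal: "normal N G"
    and N_orbs: "card (orbits_of phi N V) \<ge> 3"
    and N_max: "\<And>M. normal M G \<Longrightarrow> N \<subseteq> M \<Longrightarrow> card (orbits_of phi M V) \<ge> 3 \<Longrightarrow> M = N"

sublocale T41 \<subseteq> normal N G by (rule N_normal)
sublocale T41 \<subseteq> ga: group_action G V phi
  using dt by (simp add: distance_transitive_def aut_action_def)

context T41
begin

abbreviation Ob where "Ob v \<equiv> orbit_of phi N v"
abbreviation PP where "PP \<equiv> orbits_of phi N V"
abbreviation D2 where "D2 u w \<equiv> w \<in> V \<and> w \<noteq> u \<and> \<not> E u w \<and> (\<exists>c. E u c \<and> E c w)"

lemma faithful: "inj_on phi (carrier G)"
  using dt by (simp add: distance_transitive_def aut_action_def)

lemma edge_pres: "g \<in> carrier G \<Longrightarrow> u \<in> V \<Longrightarrow> v \<in> V \<Longrightarrow> E (phi g u) (phi g v) \<longleftrightarrow> E u v"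
  using dt by (simp add: distance_transitive_def aut_action_def)

lemma E_V: "E u v \<Longrightarrow> u \<in> V \<and> v \<in> V"
  using graph by (simp add: sgraph_def)

lemma E_sym: "E u v \<Longrightarrow> E v u"
  using graph by (simp add: sgraph_def)

lemma E_irr: "\<not> E u u"
  using graph by (simp add: sgraph_def)

lemma act_V: "g \<in> carrier G \<Longrightarrow> v \<in> V \<Longrightarrow> phi g v \<in> V"
  using ga.element_image by blast

lemma act_mult: "g \<in> carrier G \<Longrightarrow> h \<in> carrier G \<Longrightarrow> v \<in> V \<Longrightarrow> phi (g \<otimes> h) v = phi g (phi h v)"
  using ga.composition_rule by blast

lemma act_one: "v \<in> V \<Longrightarrow> phi \<one> v = v"
  by (subst ga.id_eq_one[symmetric]) simp

lemma act_inv1: "g \<in> carrier G \<Longrightarrow> v \<in> V \<Longrightarrow> phi (inv g) (phi g v) = v"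
  using ga.orbit_sym_aux by blast

lemma act_inv2: "g \<in> carrier G \<Longrightarrow> v \<in> V \<Longrightarrow> phi g (phi (inv g) v) = v"
  using act_inv1[of "inv g" v] by simp

lemma N_G: "n \<in> N \<Longrightarrow> n \<in> carrier G"
  using subset by blast

lemma Ob_mem: "w \<in> Ob v \<longleftrightarrow> (\<exists>n\<in>N. phi n v = w)"
  unfolding orbit_of_def by (simp add: image_iff eq_commute)

lemma N_one: "\<one> \<in> N"
  by (rule subgroup.one_closed[OF is_subgroup])

lemma N_mult: "m \<in> N \<Longrightarrow> n \<in> N \<Longrightarrow> m \<otimes> n \<in> N"
  by (rule subgroup.m_closed[OF is_subgroup])

lemma N_inv: "m \<in> N \<Longrightarrow> inv m \<in> N"
  by (rule subgroup.m_inv_closed[OF is_subgroup])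

lemma Ob_self: "v \<in> V \<Longrightarrow> v \<in> Ob v"
  unfolding Ob_mem using N_one act_one by (intro bexI[of _ "\<one>"]) auto

lemma Ob_V: "v \<in> V \<Longrightarrow> Ob v \<subseteq> V"
  by (auto simp: Ob_mem intro!: act_V N_G)

lemma Ob_trans: "v \<in> V \<Longrightarrow> w \<in> Ob v \<Longrightarrow> x \<in> Ob w \<Longrightarrow> x \<in> Ob v"
  unfolding Ob_mem proof (elim bexE)
  fix n m assume "v \<in> V" "n \<in> N" "phi n v = w" "m \<in> N" "phi m w = x"
  then have "phi (m \<otimes> n) v = x" using act_mult N_G by simp
  then show "\<exists>k\<in>N. phi k v = x" using N_mult \<open>n \<in> N\<close> \<open>m \<in> N\<close> by blast
qed

lemma Ob_sym: "v \<in> V \<Longrightarrow> w \<in> Ob v \<Longrightarrow> v \<in> Ob w"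
  unfolding Ob_mem proof (elim bexE)
  fix n assume "v \<in> V" "n \<in> N" "phi n v = w"
  then have "phi (inv n) w = v" using act_inv1 N_G by blast
  then show "\<exists>k\<in>N. phi k w = v" using N_inv \<open>n \<in> N\<close> by blast
qed

lemma Ob_eq: "v \<in> V \<Longrightarrow> w \<in> Ob v \<Longrightarrow> Ob w = Ob v"
proof -
  assume a: "v \<in> V" "w \<in> Ob v"
  then have w: "w \<in> V" using Ob_V by blast
  show ?thesis
  proof
    show "Ob w \<subseteq> Ob v" using Ob_trans a by blast
    show "Ob v \<subseteq> Ob w" using Ob_trans[OF w] Ob_sym[OF a] by blast
  qed
qed

lemma Ob_eq_iff: "v \<in> V \<Longrightarrow> w \<in> V \<Longrightarrow> Ob v = Ob w \<longleftrightarrow> w \<in> Ob v"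
proof
  assume "v \<in> V" "w \<in> V" "Ob v = Ob w"
  then show "w \<in> Ob v" using Ob_self[of w] by simp
next
  assume "v \<in> V" "w \<in> V" "w \<in> Ob v"
  then show "Ob v = Ob w" using Ob_eq by (metis (no_types))
qed

lemma Ob_act: "g \<in> carrier G \<Longrightarrow> v \<in> V \<Longrightarrow> w \<in> Ob v \<Longrightarrow> phi g w \<in> Ob (phi g v)"
proof -
  assume g: "g \<in> carrier G" and v: "v \<in> V" and "w \<in> Ob v"
  then obtain n where n: "n \<in> N" "phi n v = w" by (auto simp: Ob_mem)
  have c: "g \<otimes> n \<otimes> inv g \<in> N" using inv_op_closed2[OF g n(1)] .
  have nG: "n \<in> carrier G" using N_G n(1) .
  have "phi (g \<otimes> n \<otimes> inv g) (phi g v) = phi (g \<otimes> n) (phi (inv g) (phi g v))"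
    using act_mult[of "g \<otimes> n" "inv g" "phi g v"] g nG act_V[OF g v] by simp
  also have "\<dots> = phi (g \<otimes> n) v" using act_inv1[OF g v] by simp
  also have "\<dots> = phi g w" using act_mult[OF g nG v] n(2) by simp
  finally show ?thesis unfolding Ob_mem using c by (intro bexI[of _ "g \<otimes> n \<otimes> inv g"])
qed

lemma Ob_img: "g \<in> carrier G \<Longrightarrow> v \<in> V \<Longrightarrow> phi g ` Ob v = Ob (phi g v)"
proof
  assume g: "g \<in> carrier G" and v: "v \<in> V"
  show "phi g ` Ob v \<subseteq> Ob (phi g v)" using Ob_act[OF g v] by (intro image_subsetI)
  show "Ob (phi g v) \<subseteq> phi g ` Ob v"
  proof
    fix x assume x: "x \<in> Ob (phi g v)"
    have gv: "phi g v \<in> V" using act_V[OF g v] .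
    have xV: "x \<in> V" using Ob_V[OF gv] x by (rule subsetD)
    have "phi (inv g) x \<in> Ob (phi (inv g) (phi g v))" using Ob_act[OF _ gv x, of "inv g"] g by simp
    then have a: "phi (inv g) x \<in> Ob v" using act_inv1[OF g v] by simp
    have "x = phi g (phi (inv g) x)" using act_inv2[OF g xV] by simp
    then show "x \<in> phi g ` Ob v" using a by (rule image_eqI)
  qed
qed

lemma Ob_ne: "g \<in> carrier G \<Longrightarrow> v \<in> V \<Longrightarrow> w \<in> V \<Longrightarrow> Ob (phi g v) = Ob (phi g w) \<longleftrightarrow> Ob v = Ob w"
proof -
  assume g: "g \<in> carrier G" and v: "v \<in> V" and w: "w \<in> V"
  show ?thesis
  proof
    assume "Ob (phi g v) = Ob (phi g w)"
    then have "phi g w \<in> Ob (phi g v)" using Ob_self[OF act_V[OF g w]] by simp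
    then have "phi (inv g) (phi g w) \<in> Ob (phi (inv g) (phi g v))"
      using Ob_act[of "inv g" "phi g v" "phi g w"] g act_V v by simp
    then have "w \<in> Ob v" using act_inv1 g v w by simp
    then show "Ob v = Ob w" by (rule Ob_eq[OF v, symmetric])
  next
    assume "Ob v = Ob w"
    then have "w \<in> Ob v" using Ob_self[OF w] by simp
    then have "phi g w \<in> Ob (phi g v)" using Ob_act[OF g v] by simp
    then show "Ob (phi g v) = Ob (phi g w)" by (rule Ob_eq[OF act_V[OF g v], symmetric])
  qed
qed

lemma PP_mem: "B \<in> PP \<longleftrightarrow> (\<exists>v\<in>V. B = Ob v)"
  unfolding orbits_of_def by (rule image_iff)

lemma PP_fin: "finite PP"
  using fin by (simp add: orbits_of_def)

lemma dt_vt: "transitive_on phi (carrier G) V"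
  using dt unfolding distance_transitive_def by blast

lemma dt_st: "u \<in> V \<Longrightarrow> i \<le> 2 \<Longrightarrow> transitive_on phi (stab G phi u) (sphere V E u i)"
  using dt unfolding distance_transitive_def by blast

lemma vt: "u \<in> V \<Longrightarrow> v \<in> V \<Longrightarrow> \<exists>g\<in>carrier G. phi g u = v"
  using dt_vt unfolding transitive_on_def by simp

lemma stab_tr: "u \<in> V \<Longrightarrow> i \<le> 2 \<Longrightarrow> v \<in> sphere V E u i \<Longrightarrow> w \<in> sphere V E u i \<Longrightarrow>
   \<exists>g\<in>carrier G. phi g u = u \<and> phi g v = w"
proof -
  assume a: "u \<in> V" "i \<le> 2" "v \<in> sphere V E u i" "w \<in> sphere V E u i"
  have "\<forall>x\<in>sphere V E u i. \<forall>y\<in>sphere V E u i. \<exists>h\<in>stab G phi u. phi h x = y"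
    using dt_st[OF a(1,2)] unfolding transitive_on_def .
  then obtain g where "g \<in> stab G phi u" "phi g v = w" using a(3,4) by blast
  then show ?thesis unfolding stab_def by auto
qed

lemma Ob_card: "v \<in> V \<Longrightarrow> w \<in> V \<Longrightarrow> card (Ob v) = card (Ob w)"
proof -
  assume v: "v \<in> V" and w: "w \<in> V"
  obtain g where g: "g \<in> carrier G" "phi g v = w"
    using vt[OF v w] by blast
  have "inj_on (phi g) (Ob v)" using ga.inj_prop[OF g(1)] Ob_V[OF v] by (rule inj_on_subset)
  then have "card (phi g ` Ob v) = card (Ob v)" by (rule card_image)
  then show ?thesis using Ob_img[OF g(1) v] g(2) by simp
qed

lemma nb_tr: "E u v \<Longrightarrow> E u w \<Longrightarrow> \<exists>g\<in>carrier G. phi g u = u \<and> phi g v = w"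
proof -
  assume a: "E u v" "E u w"
  have s: "sphere V E u 1 = {v\<in>V. E u v}" using E_irr by (rule sphere1)
  have "u \<in> V" "v \<in> sphere V E u 1" "w \<in> sphere V E u 1" using a E_V unfolding s by auto
  then show ?thesis using stab_tr[of u 1 v w] by simp
qed

lemma d2_tr: "u \<in> V \<Longrightarrow> D2 u v \<Longrightarrow> D2 u w \<Longrightarrow> \<exists>g\<in>carrier G. phi g u = u \<and> phi g v = w"
proof -
  assume a: "u \<in> V" "D2 u v" "D2 u w"
  have s: "sphere V E u 2 = {v\<in>V. v \<noteq> u \<and> \<not> E u v \<and> (\<exists>w. E u w \<and> E w v)}" using E_irr by (rule sphere2)
  have "v \<in> sphere V E u 2" "w \<in> sphere V E u 2" using a unfolding s by auto
  then show ?thesis using stab_tr[of u 2 v w] a(1) by simp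
qed

lemma D2_pres: "g \<in> carrier G \<Longrightarrow> u \<in> V \<Longrightarrow> D2 u w \<Longrightarrow> D2 (phi g u) (phi g w)"
proof -
  assume g: "g \<in> carrier G" and u: "u \<in> V" and d: "D2 u w"
  then obtain c where c: "E u c" "E c w" by blast
  have cV: "c \<in> V" and wV: "w \<in> V" using E_V c by auto
  have 1: "E (phi g u) (phi g c)" using edge_pres[OF g u cV] c(1) by simp
  have 2: "E (phi g c) (phi g w)" using edge_pres[OF g cV wV] c(2) by simp
  have 3: "phi g w \<noteq> phi g u"
  proof
    assume "phi g w = phi g u"
    then have "w = u" using wV u by (rule inj_onD[OF ga.inj_prop[OF g]])
    then show False using d by simp
  qed
  have 4: "\<not> E (phi g u) (phi g w)" using edge_pres[OF g u wV] d by simp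
  show ?thesis using 1 2 3 4 act_V[OF g wV] by blast
qed

lemma orbits_le: "(\<And>v. v \<in> V \<Longrightarrow> Ob v \<in> S) \<Longrightarrow> card S \<le> 2 \<Longrightarrow> finite S \<Longrightarrow> False"
proof -
  assume a: "\<And>v. v \<in> V \<Longrightarrow> Ob v \<in> S" and b: "card S \<le> 2" and c: "finite S"
  have "PP \<subseteq> S" unfolding orbits_of_def using a by (rule image_subsetI)
  then have "card PP \<le> card S" using c by (rule card_mono[rotated])
  then have "card PP \<le> 2" using b by (rule order_trans)
  then show False using N_orbs by linarith
qed

lemma no_inner: "v \<in> V \<Longrightarrow> w \<in> Ob v \<Longrightarrow> \<not> E v w"
proof
  assume v0: "v \<in> V" "w \<in> Ob v" "E v w"
  have all: "y \<in> Ob x" if xy: "E x y" for x y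
  proof -
    have x: "x \<in> V" "y \<in> V" using E_V xy by auto
    obtain h where h: "h \<in> carrier G" "phi h v = x" using vt v0 x by blast
    have "E v (phi (inv h) y)" using edge_pres[of "inv h" x y] h xy x act_inv1[of h v] v0
      by simp
    then obtain k where k: "k \<in> carrier G" "phi k v = v" "phi k w = phi (inv h) y"
      using nb_tr v0 by blast
    have "phi (inv h) y \<in> Ob v" using Ob_act[OF k(1) v0(1,2)] k by simp
    then have "phi h (phi (inv h) y) \<in> Ob x" using Ob_act[OF h(1) v0(1)] h(2) by simp
    then show ?thesis using act_inv2 h x by simp
  qed
  have "\<And>x. x \<in> V \<Longrightarrow> x \<in> Ob v"
  proof -
    fix x assume "x \<in> V"
    then obtain n where "walk E v x n" using conn v0 by (auto simp: connected_graph_def)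
    then show "x \<in> Ob v"
    proof (rule walk_closed)
      show "v \<in> Ob v" using v0 Ob_self by blast
      fix a b assume "a \<in> Ob v" "E a b"
      then show "b \<in> Ob v" using all Ob_trans v0(1) by blast
    qed
  qed
  then have "\<And>x. x \<in> V \<Longrightarrow> Ob x \<in> {Ob v}" using Ob_eq[OF v0(1)] by blast
  then show False using orbits_le[of "{Ob v}"] by simp
qed

end

context T41
begin

lemma Ob_memI: "n \<in> N \<Longrightarrow> phi n v \<in> Ob v"
  unfolding Ob_mem by blast

lemma lift:
  assumes x: "x \<in> V" and adj: "quot_adj PP E (Ob x) B'"
  shows "\<exists>y\<in>B'. E x y"
proof -
  from adj obtain x0 y0 where x0: "x0 \<in> Ob x" and y0: "y0 \<in> B'" and e: "E x0 y0" and B': "B' \<in> PP"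
    unfolding quot_adj_def by blast
  obtain b where b: "b \<in> V" "B' = Ob b" using B' PP_mem by blast
  have x0V: "x0 \<in> V" and y0V: "y0 \<in> V" using E_V e by auto
  have "x \<in> Ob x0" using Ob_sym[OF x x0] .
  then obtain n where n: "n \<in> N" "phi n x0 = x" unfolding Ob_mem by blast
  have "E (phi n x0) (phi n y0)" using edge_pres[OF N_G[OF n(1)] x0V y0V] e by simp
  then have "E x (phi n y0)" using n(2) by simp
  moreover have "phi n y0 \<in> B'"
    using Ob_trans[OF b(1) _ Ob_memI[OF n(1)], of y0] y0 b(2) by simp
  ultimately show ?thesis by blast
qed

lemma cover_uniq:
  assumes exy: "E x y" and exy': "E x y'" and yy: "y' \<in> Ob y"
  shows "y = y'"
proof (rule ccontr)
  assume ne: "y \<noteq> y'"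
  have xV: "x \<in> V" and yV: "y \<in> V" and y'V: "y' \<in> V" using E_V exy exy' by auto
  have d0: "D2 y y'"
  proof -
    have "\<not> E y y'" using no_inner[OF yV yy] .
    moreover have "E y x" using E_sym[OF exy] .
    ultimately show ?thesis using y'V ne exy' by blast
  qed
  have D2in: "w \<in> Ob z" if z: "z \<in> V" and dz: "D2 z w" for z w
  proof -
    obtain h where h: "h \<in> carrier G" "phi h y = z" using vt[OF yV z] by blast
    have wV: "w \<in> V" using dz by blast
    have hi: "inv h \<in> carrier G" using h(1) by simp
    have "D2 (phi (inv h) z) (phi (inv h) w)" using D2_pres[OF hi z dz] .
    then have d1: "D2 y (phi (inv h) w)" using act_inv1[OF h(1) yV] h(2) by simp
    obtain k where k: "k \<in> carrier G" "phi k y = y" "phi k y' = phi (inv h) w"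
      using d2_tr[OF yV d0 d1] by blast
    have "phi k y' \<in> Ob (phi k y)" using Ob_act[OF k(1) yV yy] .
    then have "phi (inv h) w \<in> Ob y" using k by simp
    then have "phi h (phi (inv h) w) \<in> Ob (phi h y)" using Ob_act[OF h(1) yV] by blast
    then show ?thesis using act_inv2[OF h(1) wV] h(2) by simp
  qed
  have step2: "E c c'" if ac: "E a c" and ac': "E a c'" and oc: "Ob c \<noteq> Ob c'" for a c c'
  proof (rule ccontr)
    assume nc: "\<not> E c c'"
    have cV: "c \<in> V" and c'V: "c' \<in> V" using E_V ac ac' by auto
    have "c \<noteq> c'" using oc by blast
    then have "D2 c c'" using nc c'V E_sym[OF ac] ac' by blast
    then have "c' \<in> Ob c" using D2in[OF cV] by blast
    then have "Ob c' = Ob c" using Ob_eq[OF cV] by blast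
    then show False using oc by simp
  qed
  have step3: "\<exists>x0 c1 c2. E x0 c1 \<and> E x0 c2 \<and> Ob c1 \<noteq> Ob c2"
  proof (rule ccontr)
    assume "\<not> ?thesis"
    then have one: "Ob c1 = Ob c2" if "E x0 c1" "E x0 c2" for x0 c1 c2 using that by blast
    let ?S = "Ob x \<union> Ob y"
    have cl: "b \<in> ?S" if a: "a \<in> ?S" and ab: "E a b" for a b
    proof -
      have bV: "b \<in> V" using E_V ab by blast
      show ?thesis
      proof (cases "a \<in> Ob x")
        case True
        then obtain n where n: "n \<in> N" "phi n x = a" unfolding Ob_mem by blast
        have "E (phi n x) (phi n y)" using edge_pres[OF N_G[OF n(1)] xV yV] exy by simp
        then have "Ob b = Ob (phi n y)" using one ab n(2) by blast
        then have "phi n y \<in> Ob b" using Ob_memI[OF n(1)] Ob_eq_iff[OF bV act_V[OF N_G[OF n(1)] yV]] by blast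
        then have "b \<in> Ob (phi n y)" using Ob_sym[OF bV] by blast
        then have "b \<in> Ob y" using Ob_trans[OF yV Ob_memI[OF n(1)]] by blast
        then show ?thesis by blast
      next
        case False
        then have "a \<in> Ob y" using a by blast
        then obtain n where n: "n \<in> N" "phi n y = a" unfolding Ob_mem by blast
        have "E (phi n y) (phi n x)" using edge_pres[OF N_G[OF n(1)] yV xV] E_sym[OF exy] by simp
        then have "Ob b = Ob (phi n x)" using one ab n(2) by blast
        then have "phi n x \<in> Ob b" using Ob_memI[OF n(1)] Ob_eq_iff[OF bV act_V[OF N_G[OF n(1)] xV]] by blast
        then have "b \<in> Ob (phi n x)" using Ob_sym[OF bV] by blast
        then have "b \<in> Ob x" using Ob_trans[OF xV Ob_memI[OF n(1)]] by blast
        then show ?thesis by blast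
      qed
    qed
    have inS: "v \<in> ?S" if v: "v \<in> V" for v
    proof -
      obtain n where "walk E x v n" using conn xV v by (auto simp: connected_graph_def)
      then show ?thesis
      proof (rule walk_closed)
        show "x \<in> ?S" using Ob_self[OF xV] by blast
      qed (rule cl)
    qed
    have "Ob v \<in> {Ob x, Ob y}" if v: "v \<in> V" for v
    proof -
      have "v \<in> Ob x \<or> v \<in> Ob y" using inS[OF v] by blast
      then show ?thesis using Ob_eq[OF xV, of v] Ob_eq[OF yV, of v] by blast
    qed
    moreover have "card {Ob x, Ob y} \<le> 2" by (simp add: card_insert_le_m1)
    ultimately show False using orbits_le[of "{Ob x, Ob y}"] by blast
  qed
  have step3': "\<exists>c'. E a c' \<and> Ob c' \<noteq> Ob c" if ac: "E a c" for a c
  proof -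
    obtain x0 c1 c2 where e1: "E x0 c1" and e2: "E x0 c2" and o: "Ob c1 \<noteq> Ob c2" using step3 by blast
    have V0: "x0 \<in> V" "c1 \<in> V" "c2 \<in> V" "a \<in> V" using E_V e1 e2 ac by auto
    obtain h where h: "h \<in> carrier G" "phi h x0 = a" using vt[OF V0(1) V0(4)] by blast
    have "E a (phi h c1)" "E a (phi h c2)"
      using edge_pres[OF h(1) V0(1) V0(2)] edge_pres[OF h(1) V0(1) V0(3)] e1 e2 h(2) by auto
    moreover have "Ob (phi h c1) \<noteq> Ob (phi h c2)" using Ob_ne[OF h(1) V0(2) V0(3)] o by simp
    ultimately show ?thesis by metis
  qed
  have step4: "z = v \<or> E v z \<or> D2 v z" if v: "v \<in> V" and z: "z \<in> V" for v z
  proof -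
    let ?S = "{z. z = v \<or> E v z \<or> D2 v z}"
    have cl: "z' \<in> ?S" if zS: "z \<in> ?S" and zz: "E z z'" for z z'
    proof -
      have z'V: "z' \<in> V" using E_V zz by blast
      have "z = v \<or> E v z \<or> D2 v z" using zS by blast
      moreover
      { assume "z = v" then have ?thesis using zz by blast }
      moreover
      { assume "E v z" then have ?thesis using zz z'V by blast }
      moreover
      { assume d: "D2 v z"
        have ?thesis
        proof (cases "z' = v \<or> E v z'")
          case True then show ?thesis by blast
        next
          case False
          then have nz: "z' \<noteq> v" "\<not> E v z'" by auto
          obtain a where va: "E v a" and az: "E a z" using d by blast
          have zV: "z \<in> V" using d by blast
          have zOb: "z \<in> Ob v" using D2in[OF v d] .
          have Obz: "Ob z = Ob v" using Ob_eq[OF v zOb] .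
          obtain c where ac: "E a c" and oc: "Ob c \<noteq> Ob v" using step3'[OF E_sym[OF va]] by blast
          have cv: "E c v" using step2[OF ac E_sym[OF va] oc] .
          have cz: "E c z" using step2[OF ac az] oc Obz by simp
          have "\<exists>c. E v c \<and> E c z'"
          proof (cases "Ob z' = Ob c")
            case False
            have "E c z'" using step2[OF E_sym[OF cz] zz False[symmetric]] .
            then show ?thesis using E_sym[OF cv] by blast
          next
            case True
            show ?thesis
            proof (cases "E a z'")
              case True then show ?thesis using va by blast
            next
              case False
              have "a \<noteq> z'" using nz(2) va by blast
              then have "D2 a z'" using False z'V az zz by blast
              then have "z' \<in> Ob a" using D2in E_V[OF va] by blast
              then have "Ob z' = Ob a" using Ob_eq E_V[OF va] by blast
              then have "c \<in> Ob a" using \<open>Ob z' = Ob c\<close> Ob_self E_V[OF ac] by metis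
              then show ?thesis using no_inner E_V[OF va] ac by blast
            qed
          qed
          then show ?thesis using nz z'V by blast
        qed }
      ultimately show ?thesis by blast
    qed
    obtain n where "walk E v z n" using conn v z by (auto simp: connected_graph_def)
    then have "z \<in> ?S"
    proof (rule walk_closed)
      show "v \<in> ?S" by blast
    qed (rule cl)
    then show ?thesis by blast
  qed
  have "is_complete_multipartite V E (card PP) (card (Ob y))"
    unfolding is_complete_multipartite_def
  proof (intro exI[of _ PP] conjI ballI)
    show "\<Union>PP = V"
    proof
      show "\<Union>PP \<subseteq> V" using Ob_V unfolding orbits_of_def by blast
      show "V \<subseteq> \<Union>PP" using Ob_self unfolding orbits_of_def by blast
    qed
  next
    fix B B' assume B: "B \<in> PP" and B': "B' \<in> PP"
    show "B \<noteq> B' \<longrightarrow> B \<inter> B' = {}"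
    proof (intro impI equalityI subsetI)
      fix z assume ne: "B \<noteq> B'" and z: "z \<in> B \<inter> B'"
      obtain b where b: "b \<in> V" "B = Ob b" using B PP_mem by blast
      obtain b' where b': "b' \<in> V" "B' = Ob b'" using B' PP_mem by blast
      have "Ob z = Ob b" using Ob_eq[OF b(1)] z b(2) by blast
      moreover have "Ob z = Ob b'" using Ob_eq[OF b'(1)] z b'(2) by blast
      ultimately show "z \<in> {}" using ne b(2) b'(2) by simp
    qed simp
  next
    show "card PP = card PP" ..
  next
    fix B assume B: "B \<in> PP"
    obtain b where b: "b \<in> V" "B = Ob b" using B PP_mem by blast
    show "card B = card (Ob y)" using Ob_card[OF b(1) yV] b(2) by simp
  next
    fix u v assume u: "u \<in> V" and v: "v \<in> V"
    show "E u v \<longleftrightarrow> \<not> (\<exists>B\<in>PP. u \<in> B \<and> v \<in> B)"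
    proof
      assume e: "E u v"
      show "\<not> (\<exists>B\<in>PP. u \<in> B \<and> v \<in> B)"
      proof
        assume "\<exists>B\<in>PP. u \<in> B \<and> v \<in> B"
        then obtain B where B: "B \<in> PP" "u \<in> B" "v \<in> B" by blast
        then obtain b where b0: "b \<in> V" "B = Ob b" unfolding PP_mem by blast
        then have b: "b \<in> V" "u \<in> Ob b" "v \<in> Ob b" using B by auto
        have "Ob u = Ob b" using Ob_eq[OF b(1) b(2)] .
        then have "v \<in> Ob u" using b(3) by simp
        then show False using no_inner[OF u] e by blast
      qed
    next
      assume n: "\<not> (\<exists>B\<in>PP. u \<in> B \<and> v \<in> B)"
      have OuP: "Ob u \<in> PP" unfolding orbits_of_def using u by (rule imageI)
      have "v \<notin> Ob u" using n OuP Ob_self[OF u] by blast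
      moreover have "u \<noteq> v" using n OuP Ob_self[OF u] by blast
      moreover have "\<not> D2 u v \<or> v \<in> Ob u" using D2in[OF u] by blast
      ultimately show "E u v" using step4[OF u v] by blast
    qed
  qed
  moreover have "card PP \<ge> 3" using N_orbs .
  moreover have "card (Ob y) \<ge> 2"
  proof -
    have "{y, y'} \<subseteq> Ob y" using Ob_self[OF yV] yy by blast
    moreover have "finite (Ob y)" using Ob_V[OF yV] fin by (rule finite_subset)
    ultimately have "card {y, y'} \<le> card (Ob y)" by (rule card_mono[rotated])
    then show ?thesis using ne by simp
  qed
  ultimately show False using not_cmp by blast
qed

lemma is_cover: "is_cover V E PP"
  unfolding is_cover_def
proof (intro ballI impI)
  fix B B' x assume B: "B \<in> PP" and B': "B' \<in> PP" and adj: "quot_adj PP E B B'" and x: "x \<in> B"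
  obtain b where b: "b \<in> V" "B = Ob b" using B PP_mem by blast
  have xV: "x \<in> V" using Ob_V[OF b(1)] x b(2) by blast
  have "Ob x = B" using Ob_eq[OF b(1)] x b(2) by blast
  then have adj': "quot_adj PP E (Ob x) B'" using adj by simp
  obtain y where y: "y \<in> B'" "E x y" using lift[OF xV adj'] by blast
  obtain c where c: "c \<in> V" "B' = Ob c" using B' PP_mem by blast
  show "\<exists>!y. y \<in> B' \<and> E x y"
  proof (rule ex1I[of _ y])
    show "y \<in> B' \<and> E x y" using y by blast
    fix y' assume y': "y' \<in> B' \<and> E x y'"
    have "Ob y = Ob c" using Ob_eq[OF c(1)] y(1) c(2) by blast
    then have "y' \<in> Ob y" using y' c(2) by simp
    then show "y' = y" using cover_uniq[OF y(2)] y' by blast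
  qed
qed

end

context T41
begin

abbreviation QA where "QA \<equiv> quot_act phi N V"
abbreviation QE where "QE \<equiv> quot_adj PP E"

lemma fix_all:
  assumes n: "n \<in> N" and v: "v \<in> V" and fx: "phi n v = v" and z: "z \<in> V"
  shows "phi n z = z"
proof -
  let ?S = "{z\<in>V. phi n z = z}"
  have nG: "n \<in> carrier G" using N_G[OF n] .
  have cl: "b \<in> ?S" if a: "a \<in> ?S" and ab: "E a b" for a b
  proof -
    have aV: "a \<in> V" and bV: "b \<in> V" using E_V ab by auto
    have "E (phi n a) (phi n b)" using edge_pres[OF nG aV bV] ab by simp
    then have e2: "E a (phi n b)" using a by simp
    have "phi n b \<in> Ob b" using Ob_memI[OF n] .
    then have "b = phi n b" by (rule cover_uniq[OF ab e2])
    then show ?thesis using bV by simp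
  qed
  obtain k where "walk E v z k" using conn v z by (auto simp: connected_graph_def)
  then have "z \<in> ?S"
  proof (rule walk_closed)
    show "v \<in> ?S" using v fx by simp
  qed (rule cl)
  then show ?thesis by simp
qed

lemma semireg: "semiregular G phi N V"
  unfolding semiregular_def
proof (intro ballI impI)
  fix v n assume v: "v \<in> V" and n: "n \<in> N" and fx: "phi n v = v"
  have nG: "n \<in> carrier G" using N_G[OF n] .
  have "phi n = phi \<one>"
  proof
    fix z show "phi n z = phi \<one> z"
    proof (cases "z \<in> V")
      case True
      then show ?thesis using fix_all[OF n v fx True] act_one[OF True] by simp
    next
      case False
      have "phi n \<in> extensional V" using ga.bij_prop0[OF nG] by (rule Bij_imp_extensional)
      have oG: "\<one> \<in> carrier G" by (rule monoid.one_closed[OF is_monoid])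
      have "phi \<one> \<in> extensional V" using ga.bij_prop0[OF oG] by (rule Bij_imp_extensional)
      then have "phi \<one> z = undefined" using False by (rule extensional_arb)
      moreover have "phi n z = undefined" using \<open>phi n \<in> extensional V\<close> False by (rule extensional_arb)
      ultimately show ?thesis by simp
    qed
  qed
  then show "n = \<one>" using nG monoid.one_closed[OF is_monoid] by (rule inj_onD[OF faithful])
qed

definition Ker where "Ker = {g\<in>carrier G. \<forall>v\<in>V. phi g v \<in> Ob v}"

lemma Ker_normal: "Ker \<lhd> G"
proof -
  have sub: "subgroup Ker G"
  proof (rule subgroupI)
    show "Ker \<subseteq> carrier G" unfolding Ker_def by blast
    have "phi \<one> v \<in> Ob v" if "v \<in> V" for v using Ob_memI[OF N_one] .
    then have "\<one> \<in> Ker" unfolding Ker_def by simp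
    then show "Ker \<noteq> {}" by blast
  next
    fix a assume a: "a \<in> Ker"
    then have aG: "a \<in> carrier G" unfolding Ker_def by blast
    have "phi (inv a) v \<in> Ob v" if v: "v \<in> V" for v
    proof -
      have wV: "phi (inv a) v \<in> V" using act_V[OF inv_closed[OF aG] v] .
      have "phi a (phi (inv a) v) \<in> Ob (phi (inv a) v)" using a wV unfolding Ker_def by blast
      then have "v \<in> Ob (phi (inv a) v)" using act_inv2[OF aG v] by simp
      then show ?thesis using Ob_sym[OF wV] by blast
    qed
    then show "inv a \<in> Ker" unfolding Ker_def using aG by simp
  next
    fix a b assume a: "a \<in> Ker" and b: "b \<in> Ker"
    then have aG: "a \<in> carrier G" and bG: "b \<in> carrier G" unfolding Ker_def by auto
    have "phi (a \<otimes> b) v \<in> Ob v" if v: "v \<in> V" for v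
    proof -
      have w: "phi b v \<in> Ob v" using b v unfolding Ker_def by blast
      have wV: "phi b v \<in> V" using act_V[OF bG v] .
      have "phi a (phi b v) \<in> Ob (phi b v)" using a wV unfolding Ker_def by blast
      then have "phi a (phi b v) \<in> Ob v" using Ob_eq[OF v w] by simp
      then show ?thesis using act_mult[OF aG bG v] by simp
    qed
    then show "a \<otimes> b \<in> Ker" unfolding Ker_def using aG bG by simp
  qed
  have "x \<otimes> h \<otimes> inv x \<in> Ker" if x: "x \<in> carrier G" and h: "h \<in> Ker" for x h
  proof -
    have hG: "h \<in> carrier G" using h unfolding Ker_def by blast
    have "phi (x \<otimes> h \<otimes> inv x) v \<in> Ob v" if v: "v \<in> V" for v
    proof -
      have wV: "phi (inv x) v \<in> V" using act_V[OF inv_closed[OF x] v] .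
      have "phi h (phi (inv x) v) \<in> Ob (phi (inv x) v)" using h wV unfolding Ker_def by blast
      then have "phi x (phi h (phi (inv x) v)) \<in> Ob (phi x (phi (inv x) v))" using Ob_act[OF x wV] by blast
      then have "phi x (phi h (phi (inv x) v)) \<in> Ob v" using act_inv2[OF x v] by simp
      moreover have "phi (x \<otimes> h \<otimes> inv x) v = phi x (phi h (phi (inv x) v))"
        using act_mult[OF monoid.m_closed[OF is_monoid x hG] inv_closed[OF x] v] act_mult[OF x hG wV] by simp
      ultimately show ?thesis by simp
    qed
    then show ?thesis unfolding Ker_def using x hG by simp
  qed
  then show ?thesis using sub normal_inv_iff by blast
qed

lemma Ker_orbit: "v \<in> V \<Longrightarrow> orbit_of phi Ker v = Ob v"
proof
  assume v: "v \<in> V"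
  show "orbit_of phi Ker v \<subseteq> Ob v" unfolding orbit_of_def Ker_def using v by blast
  show "Ob v \<subseteq> orbit_of phi Ker v"
  proof
    fix w assume "w \<in> Ob v"
    then obtain n where n: "n \<in> N" "phi n v = w" unfolding Ob_mem by blast
    have "n \<in> Ker" unfolding Ker_def using N_G[OF n(1)] Ob_memI[OF n(1)] by blast
    then show "w \<in> orbit_of phi Ker v" unfolding orbit_of_def using n(2) by blast
  qed
qed

lemma Ker_eq: "Ker = N"
proof (rule N_max[OF Ker_normal])
  show "N \<subseteq> Ker" unfolding Ker_def using N_G Ob_memI by blast
  have "orbits_of phi Ker V = PP" unfolding orbits_of_def using Ker_orbit by simp
  then show "3 \<le> card (orbits_of phi Ker V)" using N_orbs by simp
qed

lemma coset_in: "g \<in> carrier G \<Longrightarrow> g \<in> N #> g"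
  using rcos_self[OF _ is_subgroup] by blast

lemma coset_elem: "h \<in> N #> g \<Longrightarrow> \<exists>n\<in>N. h = n \<otimes> g"
  unfolding r_coset_def by blast

lemma QA_eq: assumes g: "g \<in> carrier G" and v: "v \<in> V"
  shows "QA (N #> g) (Ob v) = Ob (phi g v)"
proof -
  have OvP: "Ob v \<in> PP" unfolding orbits_of_def using v by (rule imageI)
  have "QA (N #> g) (Ob v) = (\<Union>h\<in>N #> g. phi h ` Ob v)"
    unfolding quot_act_def using OvP by simp
  also have "\<dots> = Ob (phi g v)"
  proof
    show "(\<Union>h\<in>N #> g. phi h ` Ob v) \<subseteq> Ob (phi g v)"
    proof (intro UN_least image_subsetI)
      fix h w assume h: "h \<in> N #> g" and w: "w \<in> Ob v"
      obtain n where n: "n \<in> N" "h = n \<otimes> g" using coset_elem[OF h] by blast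
      have wV: "w \<in> V" using Ob_V[OF v] w by blast
      have "phi h w = phi n (phi g w)" using act_mult[OF N_G[OF n(1)] g wV] n(2) by simp
      moreover have "phi g w \<in> Ob (phi g v)" using Ob_act[OF g v w] .
      moreover have "phi n (phi g w) \<in> Ob (phi g w)" using Ob_memI[OF n(1)] .
      ultimately show "phi h w \<in> Ob (phi g v)" using Ob_trans[OF act_V[OF g v]] by simp
    qed
    show "Ob (phi g v) \<subseteq> (\<Union>h\<in>N #> g. phi h ` Ob v)"
      using Ob_img[OF g v] coset_in[OF g] by blast
  qed
  finally show ?thesis .
qed

lemma QA_out: "B \<notin> PP \<Longrightarrow> QA C B = undefined"
  unfolding quot_act_def by simp

lemma Cmem: "C \<in> carrier (G Mod N) \<Longrightarrow> \<exists>g\<in>carrier G. C = N #> g"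
  unfolding carrier_FactGroup by blast

lemma CmemI: "g \<in> carrier G \<Longrightarrow> N #> g \<in> carrier (G Mod N)"
  unfolding carrier_FactGroup by blast

lemma PPmemI: "v \<in> V \<Longrightarrow> Ob v \<in> PP"
  unfolding orbits_of_def by (rule imageI)

lemma PPE: "B \<in> PP \<Longrightarrow> (\<And>v. v \<in> V \<Longrightarrow> B = Ob v \<Longrightarrow> thesis) \<Longrightarrow> thesis"
  unfolding PP_mem by blast

lemma QA_PP: "g \<in> carrier G \<Longrightarrow> B \<in> PP \<Longrightarrow> QA (N #> g) B \<in> PP"
  by (erule PPE) (simp add: QA_eq act_V PPmemI)

lemma QA_inv: "g \<in> carrier G \<Longrightarrow> B \<in> PP \<Longrightarrow> QA (N #> inv g) (QA (N #> g) B) = B"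
  by (erule PPE) (simp add: QA_eq act_V act_inv1)

lemma QA_mult: "g \<in> carrier G \<Longrightarrow> h \<in> carrier G \<Longrightarrow> B \<in> PP \<Longrightarrow>
   QA (N #> (g \<otimes> h)) B = QA (N #> g) (QA (N #> h) B)"
  by (erule PPE) (simp add: QA_eq act_V act_mult)

lemma QA_one: "B \<in> PP \<Longrightarrow> QA N B = B"
proof -
  assume B: "B \<in> PP"
  have "N #> \<one> = N" using coset_mult_one subset by blast
  then show ?thesis using B by (elim PPE) (metis QA_eq act_one monoid.one_closed[OF is_monoid])
qed

lemma QA_Bij: "g \<in> carrier G \<Longrightarrow> QA (N #> g) \<in> Bij PP"
proof -
  assume g: "g \<in> carrier G"
  have ext: "QA (N #> g) \<in> extensional PP" unfolding quot_act_def by simp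
  have "bij_betw (QA (N #> g)) PP PP"
  proof (rule bij_betw_byWitness[where f'="QA (N #> inv g)"])
    show "\<forall>a\<in>PP. QA (N #> inv g) (QA (N #> g) a) = a" using QA_inv[OF g] by blast
    show "\<forall>a\<in>PP. QA (N #> g) (QA (N #> inv g) a) = a" using QA_inv[OF inv_closed[OF g]] g by simp
    show "QA (N #> g) ` PP \<subseteq> PP" using QA_PP[OF g] by blast
    show "QA (N #> inv g) ` PP \<subseteq> PP" using QA_PP[OF inv_closed[OF g]] by blast
  qed
  then show ?thesis using ext unfolding Bij_def by blast
qed

lemma quot_group: "group (G Mod N)"
  by (rule factorgroup_is_group)

lemma quot_ga: "group_action (G Mod N) PP QA"
  unfolding group_action_def group_hom_def group_hom_axioms_def
proof (intro conjI)
  show "group (G Mod N)" by (rule quot_group)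
  show "group (BijGroup PP)" by (rule group_BijGroup)
  show "QA \<in> hom (G Mod N) (BijGroup PP)"
    unfolding hom_def
  proof (intro CollectI conjI ballI Pi_I)
    fix C assume "C \<in> carrier (G Mod N)"
    then obtain g where g: "g \<in> carrier G" "C = N #> g" using Cmem by blast
    show "QA C \<in> carrier (BijGroup PP)" using QA_Bij[OF g(1)] g(2) by (simp add: BijGroup_def)
  next
    fix C D assume C: "C \<in> carrier (G Mod N)" and D: "D \<in> carrier (G Mod N)"
    obtain g where g: "g \<in> carrier G" "C = N #> g" using Cmem[OF C] by blast
    obtain h where h: "h \<in> carrier G" "D = N #> h" using Cmem[OF D] by blast
    have CD: "C \<otimes>\<^bsub>G Mod N\<^esub> D = N #> (g \<otimes> h)" using rcos_sum[OF g(1) h(1)] g(2) h(2) by simp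
    have "QA (N #> (g \<otimes> h)) = compose PP (QA (N #> g)) (QA (N #> h))"
    proof
      fix B show "QA (N #> (g \<otimes> h)) B = compose PP (QA (N #> g)) (QA (N #> h)) B"
        by (cases "B \<in> PP") (simp_all add: compose_def QA_mult[OF g(1) h(1)] QA_out)
    qed
    then show "QA (C \<otimes>\<^bsub>G Mod N\<^esub> D) = QA C \<otimes>\<^bsub>BijGroup PP\<^esub> QA D"
      using CD g h QA_Bij[OF g(1)] QA_Bij[OF h(1)] by (simp add: BijGroup_def)
  qed
qed

lemma quot_inj: "inj_on QA (carrier (G Mod N))"
proof (rule inj_onI)
  fix C D assume C: "C \<in> carrier (G Mod N)" and D: "D \<in> carrier (G Mod N)" and eq: "QA C = QA D"
  obtain g where g: "g \<in> carrier G" "C = N #> g" using Cmem[OF C] by blast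
  obtain h where h: "h \<in> carrier G" "D = N #> h" using Cmem[OF D] by blast
  have gi: "g \<otimes> inv h \<in> carrier G" using g(1) h(1) by simp
  have "phi (g \<otimes> inv h) v \<in> Ob v" if v: "v \<in> V" for v
  proof -
    have wV: "phi (inv h) v \<in> V" using act_V[OF inv_closed[OF h(1)] v] .
    have "Ob (phi g (phi (inv h) v)) = Ob (phi h (phi (inv h) v))"
      using eq g(2) h(2) QA_eq[OF g(1) wV] QA_eq[OF h(1) wV] by metis
    then have "Ob (phi g (phi (inv h) v)) = Ob v" using act_inv2[OF h(1) v] by simp
    then have "phi g (phi (inv h) v) \<in> Ob v" using Ob_self[OF act_V[OF g(1) wV]] by simp
    then show ?thesis using act_mult[OF g(1) inv_closed[OF h(1)] v] by simp
  qed
  then have "g \<otimes> inv h \<in> Ker" unfolding Ker_def using gi by blast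
  then have "g \<otimes> inv h \<in> N" using Ker_eq by simp
  then have "g \<in> N #> h" using subgroup.rcos_module[OF is_subgroup is_group h(1) g(1)] by simp
  then have "N #> h = N #> g" using repr_independence[OF _ h(1) is_subgroup] by blast
  then show "C = D" using g(2) h(2) by simp
qed

lemma QE_pres: assumes g: "g \<in> carrier G" and adj: "QE B B'"
  shows "QE (QA (N #> g) B) (QA (N #> g) B')"
proof -
  from adj have B: "B \<in> PP" and B': "B' \<in> PP" and ne: "B \<noteq> B'" and ex: "\<exists>x\<in>B. \<exists>y\<in>B'. E x y"
    unfolding quot_adj_def by auto
  obtain v where v: "v \<in> V" "B = Ob v" using B by (rule PPE)
  obtain w where w: "w \<in> V" "B' = Ob w" using B' by (rule PPE)
  obtain x y where x: "x \<in> Ob v" and y: "y \<in> Ob w" and e: "E x y" using ex v w by blast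
  have xV: "x \<in> V" and yV: "y \<in> V" using E_V e by auto
  have "phi g x \<in> Ob (phi g v)" using Ob_act[OF g v(1) x] .
  moreover have "phi g y \<in> Ob (phi g w)" using Ob_act[OF g w(1) y] .
  moreover have "E (phi g x) (phi g y)" using edge_pres[OF g xV yV] e by simp
  moreover have "Ob (phi g v) \<noteq> Ob (phi g w)" using Ob_ne[OF g v(1) w(1)] ne v w by simp
  ultimately show ?thesis unfolding quot_adj_def using v w QA_eq[OF g] PPmemI act_V[OF g] by auto
qed

lemma QE_pres_iff: "g \<in> carrier G \<Longrightarrow> B \<in> PP \<Longrightarrow> B' \<in> PP \<Longrightarrow>
   QE (QA (N #> g) B) (QA (N #> g) B') \<longleftrightarrow> QE B B'"
  using QE_pres[of g B B'] QE_pres[of "inv g" "QA (N #> g) B" "QA (N #> g) B'"] QA_inv by auto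

lemma quot_aut: "aut_action (G Mod N) QA PP QE"
  unfolding aut_action_def
proof (intro conjI ballI)
  show "group_action (G Mod N) PP QA" by (rule quot_ga)
  show "inj_on QA (carrier (G Mod N))" by (rule quot_inj)
  fix C B B' assume C: "C \<in> carrier (G Mod N)" and B: "B \<in> PP" and B': "B' \<in> PP"
  obtain g where g: "g \<in> carrier G" "C = N #> g" using Cmem[OF C] by blast
  show "QE B B' \<longleftrightarrow> QE (QA C B) (QA C B')" using QE_pres_iff[OF g(1) B B'] g(2) by simp
qed

end

context T41
begin

lemma PP_rep: "B \<in> PP \<Longrightarrow> y \<in> B \<Longrightarrow> B = Ob y"
proof -
  assume B: "B \<in> PP" and y: "y \<in> B"
  obtain b where b: "b \<in> V" "B = Ob b" using B by (rule PPE)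
  have "Ob y = Ob b" using Ob_eq[OF b(1)] y b(2) by blast
  then show ?thesis using b(2) by simp
qed

lemma QE_PP: "QE B B' \<Longrightarrow> B \<in> PP \<and> B' \<in> PP"
  unfolding quot_adj_def by blast

lemma QE_irr: "\<not> QE B B"
  unfolding quot_adj_def by blast

lemma N_carr: "N \<in> carrier (G Mod N)"
  using CmemI[OF monoid.one_closed[OF is_monoid]] coset_mult_one[OF subset] by simp

lemma quot_stab: "g \<in> carrier G \<Longrightarrow> u \<in> V \<Longrightarrow> phi g u = u \<Longrightarrow> N #> g \<in> stab (G Mod N) QA (Ob u)"
  unfolding stab_def using CmemI QA_eq by simp

lemma N_stab: "B \<in> PP \<Longrightarrow> N \<in> stab (G Mod N) QA B"
  unfolding stab_def using N_carr QA_one by simp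

lemma quot_vt: "transitive_on QA (carrier (G Mod N)) PP"
  unfolding transitive_on_def
proof (intro ballI)
  fix B1 B2 assume B1: "B1 \<in> PP" and B2: "B2 \<in> PP"
  obtain x where x: "x \<in> V" "B1 = Ob x" using B1 by (rule PPE)
  obtain y where y: "y \<in> V" "B2 = Ob y" using B2 by (rule PPE)
  obtain g where g: "g \<in> carrier G" "phi g x = y" using vt[OF x(1) y(1)] by blast
  have "QA (N #> g) B1 = B2" using QA_eq[OF g(1) x(1)] g(2) x(2) y(2) by simp
  then show "\<exists>C\<in>carrier (G Mod N). QA C B1 = B2" using CmemI[OF g(1)] by blast
qed

lemma quot_nb_tr:
  assumes u: "u \<in> V" and a1: "QE (Ob u) B1" and a2: "QE (Ob u) B2"
  shows "\<exists>C\<in>stab (G Mod N) QA (Ob u). QA C B1 = B2"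
proof -
  obtain y1 where y1: "y1 \<in> B1" "E u y1" using lift[OF u a1] by blast
  obtain y2 where y2: "y2 \<in> B2" "E u y2" using lift[OF u a2] by blast
  have B1: "B1 = Ob y1" using PP_rep QE_PP[OF a1] y1(1) by blast
  have B2: "B2 = Ob y2" using PP_rep QE_PP[OF a2] y2(1) by blast
  obtain g where g: "g \<in> carrier G" "phi g u = u" "phi g y1 = y2" using nb_tr[OF y1(2) y2(2)] by blast
  have y1V: "y1 \<in> V" using E_V y1(2) by blast
  have "QA (N #> g) B1 = B2" using QA_eq[OF g(1) y1V] g(3) B1 B2 by simp
  then show ?thesis using quot_stab[OF g(1) u g(2)] by blast
qed

abbreviation QD2 where "QD2 B B1 \<equiv> B1 \<in> PP \<and> B1 \<noteq> B \<and> \<not> QE B B1 \<and> (\<exists>B'. QE B B' \<and> QE B' B1)"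

lemma quot_d2_lift:
  assumes u: "u \<in> V" and d: "QD2 (Ob u) B1"
  shows "\<exists>z\<in>B1. D2 u z"
proof -
  obtain B' where a: "QE (Ob u) B'" and b: "QE B' B1" using d by blast
  obtain y where y: "y \<in> B'" "E u y" using lift[OF u a] by blast
  have B': "B' = Ob y" using PP_rep QE_PP[OF a] y(1) by blast
  have yV: "y \<in> V" using E_V y(2) by blast
  obtain z where z: "z \<in> B1" "E y z" using lift[OF yV] b B' by blast
  have zV: "z \<in> V" using E_V z(2) by blast
  have B1: "B1 = Ob z" using PP_rep d z(1) by blast
  have "z \<noteq> u" using B1 d by blast
  moreover have "\<not> E u z"
  proof
    assume e: "E u z"
    have "QE (Ob u) B1" unfolding quot_adj_def using PPmemI[OF u] d Ob_self[OF u] z(1) e by blast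
    then show False using d by blast
  qed
  ultimately show ?thesis using zV y(2) z by blast
qed

lemma quot_d2_tr:
  assumes u: "u \<in> V" and d1: "QD2 (Ob u) B1" and d2: "QD2 (Ob u) B2"
  shows "\<exists>C\<in>stab (G Mod N) QA (Ob u). QA C B1 = B2"
proof -
  obtain z1 where z1: "z1 \<in> B1" "D2 u z1" using quot_d2_lift[OF u d1] by blast
  obtain z2 where z2: "z2 \<in> B2" "D2 u z2" using quot_d2_lift[OF u d2] by blast
  have B1: "B1 = Ob z1" using PP_rep d1 z1(1) by blast
  have B2: "B2 = Ob z2" using PP_rep d2 z2(1) by blast
  obtain g where g: "g \<in> carrier G" "phi g u = u" "phi g z1 = z2" using d2_tr[OF u z1(2) z2(2)] by blast
  have z1V: "z1 \<in> V" using z1(2) by blast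
  have "QA (N #> g) B1 = B2" using QA_eq[OF g(1) z1V] g(3) B1 B2 by simp
  then show ?thesis using quot_stab[OF g(1) u g(2)] by blast
qed

lemma walk_quot: "walk E x y n \<Longrightarrow> x \<in> V \<Longrightarrow> walk QE (Ob x) (Ob y) n"
proof (induction rule: walk.induct)
  case (walk_nil u)
  show ?case by (rule walk.walk_nil)
next
  case (walk_cons u w v n)
  have uV: "u \<in> V" and wV: "w \<in> V" using E_V walk_cons(1) by auto
  have "Ob u \<noteq> Ob w"
  proof
    assume "Ob u = Ob w"
    then have "w \<in> Ob u" using Ob_self[OF wV] by simp
    then show False using no_inner[OF uV] walk_cons(1) by blast
  qed
  then have "QE (Ob u) (Ob w)" unfolding quot_adj_def
    using PPmemI[OF uV] PPmemI[OF wV] Ob_self[OF uV] Ob_self[OF wV] walk_cons(1) by blast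
  moreover have "walk QE (Ob w) (Ob v) n" using walk_cons(3)[OF wV] .
  ultimately show ?case by (rule walk.walk_cons)
qed

lemma quot_sphere_tr:
  assumes B: "B \<in> PP" and i: "i \<le> 2"
  shows "transitive_on QA (stab (G Mod N) QA B) (sphere PP QE B i)"
proof -
  obtain u where u: "u \<in> V" "B = Ob u" using B by (rule PPE)
  have "i = 0 \<or> i = 1 \<or> i = 2" using i by auto
  moreover
  { assume i0: "i = 0"
    have "sphere PP QE B i = {B}" using sphere0[OF B] i0 by simp
    then have ?thesis unfolding transitive_on_def using N_stab[OF B] QA_one[OF B] by auto }
  moreover
  { assume i1: "i = 1"
    have "sphere PP QE B i = {B'\<in>PP. QE B B'}" using sphere1[of QE B PP, OF QE_irr] i1 by simp
    then have ?thesis unfolding transitive_on_def using quot_nb_tr[OF u(1)] u(2) by auto }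
  moreover
  { assume i2: "i = 2"
    have "sphere PP QE B i = {B'\<in>PP. B' \<noteq> B \<and> \<not> QE B B' \<and> (\<exists>w. QE B w \<and> QE w B')}"
      using sphere2[of QE B PP, OF QE_irr] i2 by simp
    then have ?thesis unfolding transitive_on_def using quot_d2_tr[OF u(1)] u(2) by auto }
  ultimately show ?thesis by blast
qed

lemma quot_diam:
  assumes nc: "\<not> complete_graph PP QE"
  shows "2 \<le> diam PP QE"
proof -
  obtain B1 B2 where B1: "B1 \<in> PP" and B2: "B2 \<in> PP" and ne: "B1 \<noteq> B2" and na: "\<not> QE B1 B2"
    using nc unfolding complete_graph_def by blast
  obtain x where x: "x \<in> V" "B1 = Ob x" using B1 by (rule PPE)
  obtain y where y: "y \<in> V" "B2 = Ob y" using B2 by (rule PPE)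
  obtain n where "walk E x y n" using conn x(1) y(1) by (auto simp: connected_graph_def)
  then have "walk QE (Ob x) (Ob y) n" using x(1) by (rule walk_quot)
  then have "walk QE B1 B2 n" using x(2) y(2) by simp
  then have g2: "2 \<le> gdist QE B1 B2" using ne na by (rule walk_gdist_ge2)
  let ?f = "\<lambda>p. gdist QE (fst p) (snd p)"
  have eqs: "{gdist QE u v | u v. u \<in> PP \<and> v \<in> PP} = ?f ` (PP \<times> PP)"
  proof (intro equalityI subsetI)
    fix d assume "d \<in> {gdist QE u v | u v. u \<in> PP \<and> v \<in> PP}"
    then obtain u v where "u \<in> PP" "v \<in> PP" "d = gdist QE u v" by blast
    then show "d \<in> ?f ` (PP \<times> PP)" by (intro image_eqI[of _ _ "(u, v)"]) auto
  next
    fix d assume "d \<in> ?f ` (PP \<times> PP)"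
    then obtain p where "p \<in> PP \<times> PP" "d = ?f p" by (rule imageE) simp
    then show "d \<in> {gdist QE u v | u v. u \<in> PP \<and> v \<in> PP}" by (cases p) auto
  qed
  have fin2: "finite (?f ` (PP \<times> PP))" using PP_fin by simp
  have "gdist QE B1 B2 \<in> ?f ` (PP \<times> PP)" using B1 B2 by (intro image_eqI[of _ _ "(B1, B2)"]) auto
  then have "gdist QE B1 B2 \<le> Max (?f ` (PP \<times> PP))" using fin2 by (intro Max_ge)
  then have "gdist QE B1 B2 \<le> diam PP QE" unfolding diam_def eqs .
  then show ?thesis using g2 by simp
qed

lemma quot_dt:
  assumes nc: "\<not> complete_graph PP QE"
  shows "distance_transitive (G Mod N) QA PP QE 2"
  unfolding distance_transitive_def
proof (intro conjI ballI allI impI)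
  show "aut_action (G Mod N) QA PP QE" by (rule quot_aut)
  show "2 \<le> diam PP QE" by (rule quot_diam[OF nc])
  show "transitive_on QA (carrier (G Mod N)) PP" by (rule quot_vt)
  fix B i assume "B \<in> PP" "i \<le> (2::nat)"
  then show "transitive_on QA (stab (G Mod N) QA B) (sphere PP QE B i)" by (rule quot_sphere_tr)
qed

lemma quot_arc: "arc_transitive (G Mod N) QA PP QE"
  unfolding arc_transitive_def
proof (intro conjI allI impI)
  show "aut_action (G Mod N) QA PP QE" by (rule quot_aut)
  fix B1 B2 B3 B4 assume a12: "QE B1 B2" and a34: "QE B3 B4"
  have P1: "B1 \<in> PP" using QE_PP[OF a12] by blast
  have P3: "B3 \<in> PP" using QE_PP[OF a34] by blast
  obtain x1 where x1: "x1 \<in> V" "B1 = Ob x1" using P1 by (rule PPE)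
  obtain x3 where x3: "x3 \<in> V" "B3 = Ob x3" using P3 by (rule PPE)
  have a12': "QE (Ob x1) B2" using a12 x1(2) by simp
  have a34': "QE (Ob x3) B4" using a34 x3(2) by simp
  obtain y1 where y1: "y1 \<in> B2" "E x1 y1" using lift[OF x1(1) a12'] by blast
  obtain y3 where y3: "y3 \<in> B4" "E x3 y3" using lift[OF x3(1) a34'] by blast
  have B2: "B2 = Ob y1" using PP_rep QE_PP[OF a12] y1(1) by blast
  have B4: "B4 = Ob y3" using PP_rep QE_PP[OF a34] y3(1) by blast
  have y1V: "y1 \<in> V" using E_V y1(2) by blast
  obtain g where g: "g \<in> carrier G" "phi g x1 = x3" using vt[OF x1(1) x3(1)] by blast
  have "E (phi g x1) (phi g y1)" using edge_pres[OF g(1) x1(1) y1V] y1(2) by simp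
  then have e: "E x3 (phi g y1)" using g(2) by simp
  obtain k where k: "k \<in> carrier G" "phi k x3 = x3" "phi k (phi g y1) = y3" using nb_tr[OF e y3(2)] by blast
  have kg: "k \<otimes> g \<in> carrier G" using k(1) g(1) by simp
  have "QA (N #> (k \<otimes> g)) B1 = B3"
    using QA_eq[OF kg x1(1)] act_mult[OF k(1) g(1) x1(1)] g(2) k(2) x1(2) x3(2) by simp
  moreover have "QA (N #> (k \<otimes> g)) B2 = B4"
    using QA_eq[OF kg y1V] act_mult[OF k(1) g(1) y1V] k(3) B2 B4 by simp
  ultimately show "\<exists>C\<in>carrier (G Mod N). QA C B1 = B3 \<and> QA C B2 = B4" using CmemI[OF kg] by blast
qed

end

lemma trans_card:
  assumes c: "card (orbits_of f H S) \<le> 1" and fS: "finite S"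
    and self: "\<And>x. x \<in> S \<Longrightarrow> x \<in> orbit_of f H x"
  shows "transitive_on f H S"
  unfolding transitive_on_def
proof (intro ballI)
  fix x y assume x: "x \<in> S" and y: "y \<in> S"
  have fin: "finite (orbits_of f H S)" unfolding orbits_of_def using fS by (rule finite_imageI)
  have ox: "orbit_of f H x \<in> orbits_of f H S" unfolding orbits_of_def using x by (rule imageI)
  have oy: "orbit_of f H y \<in> orbits_of f H S" unfolding orbits_of_def using y by (rule imageI)
  have "\<forall>a1\<in>orbits_of f H S. \<forall>a2\<in>orbits_of f H S. a1 = a2" using c card_le_Suc0_iff_eq[OF fin] by simp
  then have "orbit_of f H x = orbit_of f H y" using ox oy by blast
  then have "y \<in> orbit_of f H x" using self[OF y] by simp
  then show "\<exists>h\<in>H. f h x = y" unfolding orbit_of_def by blast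
qed

context T41
begin

lemma orbit_QA:
  assumes M: "subgroup M (G Mod N)" and v: "v \<in> V"
  shows "orbit_of QA M (Ob v) = Ob ` orbit_of phi (\<Union>M) v"
proof (intro equalityI subsetI)
  have Msub: "M \<subseteq> carrier (G Mod N)" using subgroup.subset[OF M] .
  fix x assume "x \<in> orbit_of QA M (Ob v)"
  then obtain C where C: "C \<in> M" "x = QA C (Ob v)" unfolding orbit_of_def by blast
  obtain g where g: "g \<in> carrier G" "C = N #> g" using Cmem C(1) Msub by blast
  have "g \<in> \<Union>M" using coset_in[OF g(1)] g(2) C(1) by blast
  then have "phi g v \<in> orbit_of phi (\<Union>M) v" unfolding orbit_of_def by blast
  moreover have "x = Ob (phi g v)" using C(2) g(2) QA_eq[OF g(1) v] by simp
  ultimately show "x \<in> Ob ` orbit_of phi (\<Union>M) v" by blast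
next
  have Msub: "M \<subseteq> carrier (G Mod N)" using subgroup.subset[OF M] .
  fix x assume "x \<in> Ob ` orbit_of phi (\<Union>M) v"
  then obtain m where m: "m \<in> \<Union>M" "x = Ob (phi m v)" unfolding orbit_of_def by blast
  then obtain C where C: "C \<in> M" "m \<in> C" by blast
  obtain g where g: "g \<in> carrier G" "C = N #> g" using Cmem C(1) Msub by blast
  obtain n where n: "n \<in> N" "m = n \<otimes> g" using coset_elem C(2) g(2) by blast
  have mG: "m \<in> carrier G" using n N_G[OF n(1)] g(1) by simp
  have "N #> g = N #> m" using repr_independence[OF _ g(1) is_subgroup] C(2) g(2) by blast
  then have "QA C (Ob v) = x" using g(2) QA_eq[OF mG v] m(2) by simp
  then show "x \<in> orbit_of QA M (Ob v)" unfolding orbit_of_def using C(1) by blast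
qed

lemma orbits_card:
  assumes M: "subgroup M (G Mod N)"
  shows "card (orbits_of QA M PP) \<le> card (orbits_of phi (\<Union>M) V)"
proof -
  have "orbits_of QA M PP = (\<lambda>v. orbit_of QA M (Ob v)) ` V"
    unfolding orbits_of_def by (simp add: image_image)
  also have "\<dots> = (\<lambda>v. Ob ` orbit_of phi (\<Union>M) v) ` V"
    using orbit_QA[OF M] by (intro image_cong) simp_all
  also have "\<dots> = (\<lambda>S. Ob ` S) ` orbits_of phi (\<Union>M) V"
    unfolding orbits_of_def by (simp add: image_image)
  finally have eq: "orbits_of QA M PP = (\<lambda>S. Ob ` S) ` orbits_of phi (\<Union>M) V" .
  have "finite (orbits_of phi (\<Union>M) V)" unfolding orbits_of_def using fin by (rule finite_imageI)
  then show ?thesis unfolding eq by (rule card_image_le)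
qed

lemma M_small:
  assumes M: "M \<lhd> (G Mod N)" and ne: "M \<noteq> {N}"
  shows "card (orbits_of phi (\<Union>M) V) \<le> 2"
proof (rule ccontr)
  assume "\<not> ?thesis"
  then have c3: "card (orbits_of phi (\<Union>M) V) \<ge> 3" by simp
  have Msg: "subgroup M (G Mod N)" using normal_imp_subgroup[OF M] .
  have NM: "N \<in> M" using subgroup.one_closed[OF Msg] by simp
  have Un: "\<Union>M \<lhd> G" using factgroup_subgroup_union_normal[OF M] .
  have "N \<subseteq> \<Union>M" using NM by blast
  then have eqN: "\<Union>M = N" using N_max[OF Un _ c3] by blast
  have "M = {N}"
  proof (intro equalityI subsetI)
    fix C assume C: "C \<in> M"
    obtain g where g: "g \<in> carrier G" "C = N #> g" using Cmem C subgroup.subset[OF Msg] by blast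
    have "g \<in> N" using coset_in[OF g(1)] g(2) C eqN by blast
    then have "C = N" using coset_join2[OF g(1) is_subgroup] g(2) by simp
    then show "C \<in> {N}" by simp
  next
    fix C assume "C \<in> {N}" then show "C \<in> M" using NM by simp
  qed
  then show False using ne by simp
qed

lemma M_card:
  assumes M: "M \<lhd> (G Mod N)" and ne: "M \<noteq> {N}"
  shows "card (orbits_of QA M PP) \<le> 2"
  using orbits_card[OF normal_imp_subgroup[OF M]] M_small[OF M ne] by linarith

lemma QA_self: "subgroup M (G Mod N) \<Longrightarrow> B \<in> PP \<Longrightarrow> B \<in> orbit_of QA M B"
proof -
  assume M: "subgroup M (G Mod N)" and B: "B \<in> PP"
  have "N \<in> M" using subgroup.one_closed[OF M] by simp
  then show ?thesis unfolding orbit_of_def using QA_one[OF B] by force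
qed

lemma qp: "quasiprimitive (G Mod N) QA PP \<or> biquasiprimitive (G Mod N) QA PP"
proof (cases "\<forall>M. M \<lhd> (G Mod N) \<longrightarrow> M \<noteq> {N} \<longrightarrow> transitive_on QA M PP")
  case True
  then have "quasiprimitive (G Mod N) QA PP" unfolding quasiprimitive_def using quot_vt by simp
  then show ?thesis by blast
next
  case False
  then obtain M where M: "M \<lhd> (G Mod N)" "M \<noteq> {N}" "\<not> transitive_on QA M PP" by blast
  have "\<not> card (orbits_of QA M PP) \<le> 1"
  proof
    assume "card (orbits_of QA M PP) \<le> 1"
    then have "transitive_on QA M PP"
      using PP_fin QA_self[OF normal_imp_subgroup[OF M(1)]] by (rule trans_card)
    then show False using M(3) by simp
  qed
  then have "card (orbits_of QA M PP) = 2" using M_card[OF M(1,2)] by simp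
  then have "biquasiprimitive (G Mod N) QA PP"
    unfolding biquasiprimitive_def using quot_vt M_card M by auto
  then show ?thesis by blast
qed

lemma locprim:
  assumes lp: "locally_primitive G phi V E"
  shows "locally_primitive (G Mod N) QA PP QE"
  unfolding locally_primitive_def
proof (intro conjI ballI)
  show "aut_action (G Mod N) QA PP QE" by (rule quot_aut)
  fix B assume B: "B \<in> PP"
  obtain u where u: "u \<in> V" "B = Ob u" using B by (rule PPE)
  have prim: "primitive_on phi (stab G phi u) (nbhd V E u)"
    using lp u(1) unfolding locally_primitive_def by blast
  have nbB: "nbhd PP QE B = {B'\<in>PP. QE (Ob u) B'}" unfolding nbhd_def using u(2) by simp
  show "primitive_on QA (stab (G Mod N) QA B) (nbhd PP QE B)"
    unfolding primitive_on_def
  proof (intro conjI allI impI)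
    show "transitive_on QA (stab (G Mod N) QA B) (nbhd PP QE B)"
      unfolding transitive_on_def nbB using quot_nb_tr[OF u(1)] u(2) by auto
  next
    fix BB assume sub: "BB \<subseteq> nbhd PP QE B"
      and blk: "\<forall>h\<in>stab (G Mod N) QA B. QA h ` BB = BB \<or> QA h ` BB \<inter> BB = {}"
    let ?Bl = "{v \<in> nbhd V E u. Ob v \<in> BB}"
    have img: "phi g ` ?Bl = {w \<in> nbhd V E u. Ob w \<in> QA (N #> g) ` BB}"
      if g: "g \<in> carrier G" "phi g u = u" for g
    proof (intro equalityI subsetI)
      fix w assume "w \<in> phi g ` ?Bl"
      then obtain v where v: "v \<in> nbhd V E u" "Ob v \<in> BB" "w = phi g v" by blast
      have vV: "v \<in> V" and e: "E u v" using v(1) unfolding nbhd_def by auto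
      have "E (phi g u) (phi g v)" using edge_pres[OF g(1) u(1) vV] e by simp
      then have "w \<in> nbhd V E u" unfolding nbhd_def using g(2) v(3) act_V[OF g(1) vV] by simp
      moreover have "Ob w = QA (N #> g) (Ob v)" using QA_eq[OF g(1) vV] v(3) by simp
      ultimately show "w \<in> {w \<in> nbhd V E u. Ob w \<in> QA (N #> g) ` BB}" using v(2) by blast
    next
      fix w assume "w \<in> {w \<in> nbhd V E u. Ob w \<in> QA (N #> g) ` BB}"
      then obtain B'' where w: "w \<in> V" "E u w" "B'' \<in> BB" "Ob w = QA (N #> g) B''"
        unfolding nbhd_def by blast
      have giG: "inv g \<in> carrier G" using g(1) by simp
      have B''P: "B'' \<in> PP" using w(3) sub unfolding nbhd_def by blast
      let ?v = "phi (inv g) w"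
      have vV: "?v \<in> V" using act_V[OF giG w(1)] .
      have gv: "phi g ?v = w" using act_inv2[OF g(1) w(1)] .
      have "phi (inv g) u = u" using act_inv1[OF g(1) u(1)] g(2) by simp
      then have "E u ?v" using edge_pres[OF giG u(1) w(1)] w(2) by simp
      then have vn: "?v \<in> nbhd V E u" unfolding nbhd_def using vV by simp
      have "Ob ?v = QA (N #> inv g) (Ob w)" using QA_eq[OF giG w(1)] by simp
      also have "\<dots> = B''" using w(4) QA_inv[OF g(1) B''P] by simp
      finally have "Ob ?v \<in> BB" using w(3) by simp
      then show "w \<in> phi g ` ?Bl" using vn gv by force
    qed
    have blkBl: "\<forall>g\<in>stab G phi u. phi g ` ?Bl = ?Bl \<or> phi g ` ?Bl \<inter> ?Bl = {}"
    proof
      fix g assume "g \<in> stab G phi u"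
      then have g: "g \<in> carrier G" "phi g u = u" unfolding stab_def by auto
      have "N #> g \<in> stab (G Mod N) QA B" using quot_stab[OF g(1) u(1) g(2)] u(2) by simp
      then have "QA (N #> g) ` BB = BB \<or> QA (N #> g) ` BB \<inter> BB = {}" using blk by blast
      then show "phi g ` ?Bl = ?Bl \<or> phi g ` ?Bl \<inter> ?Bl = {}"
      proof
        assume "QA (N #> g) ` BB = BB"
        then show ?thesis using img[OF g] by simp
      next
        assume d: "QA (N #> g) ` BB \<inter> BB = {}"
        have "phi g ` ?Bl \<inter> ?Bl = {}" using img[OF g] d by blast
        then show ?thesis by blast
      qed
    qed
    have "?Bl \<subseteq> nbhd V E u" by blast
    then have cases: "card ?Bl \<le> 1 \<or> ?Bl = nbhd V E u" using prim blkBl unfolding primitive_on_def by blast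
    have BBimg: "BB = Ob ` ?Bl"
    proof (intro equalityI subsetI)
      fix B' assume B': "B' \<in> BB"
      then have a: "QE (Ob u) B'" using sub nbB by blast
      obtain y where y: "y \<in> B'" "E u y" using lift[OF u(1) a] by blast
      have "B' = Ob y" using PP_rep QE_PP[OF a] y(1) by blast
      moreover have "y \<in> ?Bl" using y(2) E_V[OF y(2)] B' calculation unfolding nbhd_def by simp
      ultimately show "B' \<in> Ob ` ?Bl" by blast
    next
      fix B' assume "B' \<in> Ob ` ?Bl"
      then obtain v where "v \<in> ?Bl" "B' = Ob v" by (rule imageE)
      then show "B' \<in> BB" by simp
    qed
    have finBl: "finite ?Bl" using fin unfolding nbhd_def by simp
    show "card BB \<le> 1 \<or> BB = nbhd PP QE B"
    proof (cases "card ?Bl \<le> 1")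
      case True
      have c1: "card BB = card (Ob ` ?Bl)" using BBimg by (rule arg_cong)
      have c2: "card (Ob ` ?Bl) \<le> card ?Bl" using finBl by (rule card_image_le)
      have "card BB \<le> card ?Bl" using c1 c2 by linarith
      then show ?thesis using True by simp
    next
      case False
      then have all: "?Bl = nbhd V E u" using cases by simp
      have "nbhd PP QE B \<subseteq> BB"
      proof
        fix B' assume "B' \<in> nbhd PP QE B"
        then have a: "QE (Ob u) B'" using nbB by blast
        obtain y where y: "y \<in> B'" "E u y" using lift[OF u(1) a] by blast
        have "B' = Ob y" using PP_rep QE_PP[OF a] y(1) by blast
        moreover have "y \<in> nbhd V E u" using y(2) E_V[OF y(2)] unfolding nbhd_def by simp
        then have "y \<in> ?Bl" using all by simp
        ultimately show "B' \<in> BB" by simp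
      qed
      then show ?thesis using sub by blast
    qed
  qed
qed

lemma odd_part: "odd (card V) \<Longrightarrow> odd (card PP)"
proof -
  assume o: "odd (card V)"
  then have "V \<noteq> {}" by auto
  then obtain u where u: "u \<in> V" by blast
  have UV: "\<Union>PP = V"
  proof
    show "\<Union>PP \<subseteq> V" using Ob_V unfolding orbits_of_def by blast
    show "V \<subseteq> \<Union>PP" using Ob_self unfolding orbits_of_def by blast
  qed
  have pd: "pairwise disjnt PP"
    unfolding pairwise_def disjnt_def
  proof (intro ballI impI)
    fix B B' assume B: "B \<in> PP" and B': "B' \<in> PP" and ne: "B \<noteq> B'"
    show "B \<inter> B' = {}"
    proof (rule ccontr)
      assume "B \<inter> B' \<noteq> {}"
      then obtain z where z: "z \<in> B" "z \<in> B'" by blast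
      have "B = Ob z" using PP_rep[OF B z(1)] .
      moreover have "B' = Ob z" using PP_rep[OF B' z(2)] .
      ultimately show False using ne by simp
    qed
  qed
  have finB: "\<And>A. A \<in> PP \<Longrightarrow> finite A" using Ob_V fin unfolding orbits_of_def by (auto intro: finite_subset)
  have "card V = sum card PP" using card_Union_disjoint[OF pd finB] UV by simp
  also have "\<dots> = sum (\<lambda>_. card (Ob u)) PP"
  proof (rule sum.cong)
    fix B assume B: "B \<in> PP"
    obtain b where b: "b \<in> V" "B = Ob b" using B by (rule PPE)
    show "card B = card (Ob u)" using Ob_card[OF b(1) u] b(2) by simp
  qed simp
  also have "\<dots> = card PP * card (Ob u)" by simp
  finally have "card V = card PP * card (Ob u)" .
  then show ?thesis using o by simp
qed

end

theorem theorem4p1: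
  fixes G :: "('g, 'b) monoid_scheme" and phi :: "'g \<Rightarrow> 'a \<Rightarrow> 'a"
    and V :: "'a set" and E :: "'a \<Rightarrow> 'a \<Rightarrow> bool" and N :: "'g set"
  assumes grp: "group G"
    and graph: "sgraph V E" and fin: "finite V" and conn: "connected_graph V E"
    and dt: "distance_transitive G phi V E 2"
    and not_cmp: "\<not> (\<exists>m b. m \<ge> 3 \<and> b \<ge> 2 \<and> is_complete_multipartite V E m b)"
    and N_normal: "normal N G"
    and N_orbs: "card (orbits_of phi N V) \<ge> 3"
    and N_max: "\<And>M. normal M G \<Longrightarrow> N \<subseteq> M \<Longrightarrow> card (orbits_of phi M V) \<ge> 3 \<Longrightarrow> M = N"
  shows "semiregular G phi N V
    \<and> (quasiprimitive (G Mod N) (quot_act phi N V) (orbits_of phi N V)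
       \<or> biquasiprimitive (G Mod N) (quot_act phi N V) (orbits_of phi N V))
    \<and> is_cover V E (orbits_of phi N V)
    \<and> ((complete_graph (orbits_of phi N V) (quot_adj (orbits_of phi N V) E)
         \<and> arc_transitive (G Mod N) (quot_act phi N V) (orbits_of phi N V) (quot_adj (orbits_of phi N V) E))
       \<or> (\<not> complete_graph (orbits_of phi N V) (quot_adj (orbits_of phi N V) E)
         \<and> distance_transitive (G Mod N) (quot_act phi N V) (orbits_of phi N V) (quot_adj (orbits_of phi N V) E) 2))
    \<and> (locally_primitive G phi V E \<longrightarrow>
         locally_primitive (G Mod N) (quot_act phi N V) (orbits_of phi N V) (quot_adj (orbits_of phi N V) E))
    \<and> (odd (card V) \<longrightarrow> odd (card (orbits_of phi N V)))"
proof -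
  interpret T: T41 G phi V E N
    using grp graph fin conn dt not_cmp N_normal N_orbs N_max by (rule T41.intro)
  have c4: "(complete_graph (orbits_of phi N V) (quot_adj (orbits_of phi N V) E)
         \<and> arc_transitive (G Mod N) (quot_act phi N V) (orbits_of phi N V) (quot_adj (orbits_of phi N V) E))
       \<or> (\<not> complete_graph (orbits_of phi N V) (quot_adj (orbits_of phi N V) E)
         \<and> distance_transitive (G Mod N) (quot_act phi N V) (orbits_of phi N V) (quot_adj (orbits_of phi N V) E) 2)"
    using T.quot_arc T.quot_dt by blast
  show ?thesis
    using T.semireg T.qp T.is_cover c4 T.locprim T.odd_part by blast
qed


end
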